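(* BCP does not hold on $\mathbb H$ for the box-distance $d_\infty(p,q)=\|p^{-1}\cdot q\|_\infty$, where $\|(x,y,z)\|_\infty=\max\big((x^2+y^2)^{1/2},\,2|z|^{1/2}\big)$.
   Context: $\mathbb H=\mathbb R^3$ with group law $(x,y,z)\cdot(x',y',z')=(x+x',y+y',z+z'+\tfrac12(xy'-yx'))$; $d_\infty$ is a homogeneous (left invariant, dilation-homogeneous, topology-inducing) distance. BCP holds for $d$ if there is $N\geq1$ such that for every bounded $A$ and every family $\mathcal B$ of closed balls with each point of $A$ the center of some ball of $\mathcal B$, some subfamily $\mathcal F\subset\mathcal B$ satisfies $\chi_A\le\sum_{B\in\mathcal F}\chi_B\le N$. *)

theory Defs
  imports "HOL-Analysis.Analysis"
begin

type_synonym heis = "real \<times> real \<times> real"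

definition hmult :: "heis \<Rightarrow> heis \<Rightarrow> heis" where
  "hmult p q = (case p of (x, y, z) \<Rightarrow> case q of (x', y', z') \<Rightarrow>
     (x + x', y + y', z + z' + (1/2) * (x * y' - y * x')))"

definition hinv :: "heis \<Rightarrow> heis" where
  "hinv p = (case p of (x, y, z) \<Rightarrow> (-x, -y, -z))"

definition box_norm :: "heis \<Rightarrow> real" where
  "box_norm p = (case p of (x, y, z) \<Rightarrow> max (sqrt (x^2 + y^2)) (2 * sqrt \<bar>z\<bar>))"

definition d_inf :: "heis \<Rightarrow> heis \<Rightarrow> real" where
  "d_inf p q = box_norm (hmult (hinv p) q)"

definition cball_d :: "('a \<Rightarrow> 'a \<Rightarrow> real) \<Rightarrow> 'a \<Rightarrow> real \<Rightarrow> 'a set" where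
  "cball_d d c r = {q. d c q \<le> r}"

definition bounded_d :: "('a \<Rightarrow> 'a \<Rightarrow> real) \<Rightarrow> 'a set \<Rightarrow> bool" where
  "bounded_d d A \<longleftrightarrow> (\<exists>c R. \<forall>a\<in>A. d c a \<le> R)"

text \<open>Besicovitch covering property. The sum of characteristic functions
  of the balls in F at p is the number of balls of F containing p.\<close>
definition BCP :: "('a \<Rightarrow> 'a \<Rightarrow> real) \<Rightarrow> bool" where
  "BCP d \<longleftrightarrow> (\<exists>N::nat. N \<ge> 1 \<and>
     (\<forall>A \<B>. bounded_d d A
        \<longrightarrow> (\<forall>B\<in>\<B>. \<exists>c r. r > 0 \<and> B = cball_d d c r)
        \<longrightarrow> (\<forall>a\<in>A. \<exists>B\<in>\<B>. \<exists>r>0. B = cball_d d a r)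
        \<longrightarrow> (\<exists>F\<subseteq>\<B>. \<forall>p.
              (p \<in> A \<longrightarrow> (\<exists>B\<in>F. p \<in> B)) \<and>
              finite {B\<in>F. p \<in> B} \<and> card {B\<in>F. p \<in> B} \<le> N)))"

end

theory Submission
  imports Defs
begin

definition lam :: "nat \<Rightarrow> real" where "lam n = (1/2)^((n+2)^2)"
definition tt :: "nat \<Rightarrow> real" where "tt n = 1 - (1/2)^n"
definition pp :: "nat \<Rightarrow> heis" where "pp n = (lam n, lam n * tt n, (lam n)^2)"

lemma lam_pos: "lam n > 0" by (simp add: lam_def)

lemma tt_bds: "0 \<le> tt n" "tt n \<le> 1"
  by (auto simp: tt_def power_le_one)

lemma lam_mono: assumes "n < m" shows "2 * lam m \<le> lam n"
proof -
  have "(n+2)^2 + 1 \<le> (m+2)^2"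
  proof -
    have "n + 3 \<le> m + 2" using assms by simp
    hence "(n+3)^2 \<le> (m+2)^2" by (simp add: power_mono)
    moreover have "(n+2)^2 + 1 \<le> (n+3::nat)^2" by (simp add: power2_eq_square algebra_simps)
    ultimately show ?thesis by linarith
  qed
  hence "(1/2::real)^((m+2)^2) \<le> (1/2)^((n+2)^2 + 1)"
    by (intro power_decreasing) auto
  thus ?thesis by (simp add: lam_def)
qed

lemma key: assumes "n < m" shows "lam m < lam n * (tt m - tt n) / 2"
proof -
  have g: "tt m - tt n \<ge> (1/2)^(n+1)"
  proof -
    have "(1/2::real)^m \<le> (1/2)^(n+1)" using assms by (intro power_decreasing) auto
    thus ?thesis by (simp add: tt_def)
  qed
  have e: "(n+2)^2 + (n+2) < (m+2::nat)^2"
  proof -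
    have "n + 3 \<le> m + 2" using assms by simp
    hence "(n+3)^2 \<le> (m+2)^2" by (simp add: power_mono)
    moreover have "(n+2)^2 + (n+2) < (n+3::nat)^2" by (simp add: power2_eq_square algebra_simps)
    ultimately show ?thesis by linarith
  qed
  have "lam m < (1/2)^((n+2)^2 + (n+2))"
    unfolding lam_def using e by (intro power_strict_decreasing) auto
  also have "\<dots> = lam n * (1/2)^(n+1) / 2" by (simp add: lam_def power_add)
  also have "\<dots> \<le> lam n * (tt m - tt n) / 2"
    using g lam_pos[of n] by (intro divide_right_mono mult_left_mono) auto
  finally show ?thesis .
qed

lemma box_ge: "box_norm (a, b, c) \<ge> 2 * sqrt \<bar>c\<bar>"
  by (simp add: box_norm_def)

lemma norm_pp: "box_norm (pp n) = 2 * lam n" "box_norm (hinv (pp n)) = 2 * lam n"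
proof -
  let ?l = "lam n" and ?t = "tt n"
  have l: "?l > 0" by (rule lam_pos)
  have t2: "?t^2 \<le> 1" using tt_bds[of n] by (simp add: power_le_one)
  have "?l^2 * ?t^2 \<le> ?l^2 * 1" by (rule mult_left_mono[OF t2]) simp
  moreover have "0 \<le> ?l^2" by simp
  moreover have "(?l*?t)^2 = ?l^2*?t^2" by (simp add: power_mult_distrib)
  moreover have "(2*?l)^2 = 4*?l^2" by simp
  ultimately have "?l^2 + (?l * ?t)^2 \<le> (2 * ?l)^2" by linarith
  hence "sqrt (?l^2 + (?l * ?t)^2) \<le> sqrt ((2 * ?l)^2)" by (rule real_sqrt_le_mono)
  moreover have "sqrt ((2 * ?l)^2) = 2 * ?l" using l by (simp only: real_sqrt_abs)
  ultimately have s: "sqrt (?l^2 + (?l * ?t)^2) \<le> 2 * ?l" by linarith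
  have q: "sqrt \<bar>?l^2\<bar> = ?l" using l by simp
  show "box_norm (pp n) = 2 * lam n"
    using s q by (simp add: box_norm_def pp_def max_def)
  show "box_norm (hinv (pp n)) = 2 * lam n"
    using s q by (simp add: box_norm_def pp_def hinv_def max_def)
qed

lemma sep: assumes "n \<noteq> m" shows "d_inf (pp n) (pp m) > 2 * lam n"
proof -
  let ?Z = "(lam m)^2 - (lam n)^2 - (1/2) * (lam n * lam m * (tt m - tt n))"
  have h: "hmult (hinv (pp n)) (pp m) = (lam m - lam n, lam m * tt m - lam n * tt n, ?Z)"
    by (simp add: hmult_def hinv_def pp_def algebra_simps)
  have ln: "lam n > 0" and lm: "lam m > 0" by (rule lam_pos)+
  have Z: "\<bar>?Z\<bar> > (lam n)^2"
  proof (cases "n < m")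
    case True
    have "lam m * lam m < lam m * (lam n * (tt m - tt n) / 2)"
      using key[OF True] lm by simp
    thus ?thesis using lm by (simp add: power2_eq_square algebra_simps)
  next
    case False
    hence mn: "m < n" using assms by simp
    have "2 * lam n \<le> lam m" by (rule lam_mono[OF mn])
    hence "(2 * lam n)^2 \<le> (lam m)^2" using ln by (intro power_mono) auto
    moreover have "tt m \<le> tt n" using mn unfolding tt_def
      by (simp add: power_decreasing)
    moreover have "lam n * lam m * (tt m - tt n) \<le> 0"
      using calculation(2) ln lm by (simp add: mult_nonpos_nonneg[of "tt m - tt n"] mult_nonneg_nonpos)
    ultimately have "?Z \<ge> 4 * (lam n)^2 - (lam n)^2" by (simp add: power2_eq_square)
    moreover have "(lam n)^2 > 0" using ln by simp
    ultimately show ?thesis by linarith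
  qed
  have "lam n < sqrt \<bar>?Z\<bar>" by (rule real_less_rsqrt[OF Z])
  hence "2 * lam n < 2 * sqrt \<bar>?Z\<bar>" by simp
  also have "\<dots> \<le> d_inf (pp n) (pp m)" unfolding d_inf_def h by (rule box_ge)
  finally show ?thesis .
qed

lemma zero_in: "d_inf (pp n) (0,0,0) \<le> 2 * lam n"
proof -
  have "hmult (hinv (pp n)) (0,0,0) = hinv (pp n)"
    by (simp add: hmult_def hinv_def pp_def)
  thus ?thesis using norm_pp by (simp add: d_inf_def)
qed

lemma from_zero: "d_inf (0,0,0) (pp n) \<le> 2"
proof -
  have "hmult (hinv (0,0,0)) (pp n) = pp n"
    by (simp add: hmult_def hinv_def pp_def)
  moreover have "lam n \<le> 1" unfolding lam_def by (simp add: power_le_one)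
  ultimately show ?thesis using norm_pp by (simp add: d_inf_def)
qed

theorem mainTheorem5:
  shows "\<not> BCP d_inf"
proof
  assume "BCP d_inf"
  then obtain N :: nat where H: "\<forall>A \<B>. bounded_d d_inf A
        \<longrightarrow> (\<forall>B\<in>\<B>. \<exists>c r. r > 0 \<and> B = cball_d d_inf c r)
        \<longrightarrow> (\<forall>a\<in>A. \<exists>B\<in>\<B>. \<exists>r>0. B = cball_d d_inf a r)
        \<longrightarrow> (\<exists>F\<subseteq>\<B>. \<forall>p.
              (p \<in> A \<longrightarrow> (\<exists>B\<in>F. p \<in> B)) \<and>
              finite {B\<in>F. p \<in> B} \<and> card {B\<in>F. p \<in> B} \<le> N)"
    unfolding BCP_def by blast
  define ball where "ball n = cball_d d_inf (pp n) (2 * lam n)" for n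
  have rpos: "2 * lam n > 0" for n using lam_pos[of n] by simp
  have bd: "bounded_d d_inf (range pp)"
    unfolding bounded_d_def using from_zero by blast
  have b1: "\<forall>B\<in>range ball. \<exists>c r. r > 0 \<and> B = cball_d d_inf c r"
  proof
    fix B assume "B \<in> range ball"
    then obtain n where "B = ball n" by blast
    thus "\<exists>c r. r > 0 \<and> B = cball_d d_inf c r" using rpos[of n] unfolding ball_def by blast
  qed
  have b2: "\<forall>a\<in>range pp. \<exists>B\<in>range ball. \<exists>r>0. B = cball_d d_inf a r"
  proof
    fix a assume "a \<in> range pp"
    then obtain n where a: "a = pp n" by blast
    have "ball n \<in> range ball" by simp
    moreover have "ball n = cball_d d_inf a (2 * lam n)" using a ball_def by simp
    ultimately show "\<exists>B\<in>range ball. \<exists>r>0. B = cball_d d_inf a r" using rpos[of n] by blast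
  qed
  have ex: "\<exists>F\<subseteq>range ball. \<forall>p.
              (p \<in> range pp \<longrightarrow> (\<exists>B\<in>F. p \<in> B)) \<and>
              finite {B\<in>F. p \<in> B} \<and> card {B\<in>F. p \<in> B} \<le> N"
    by (rule H[rule_format, OF bd b1[rule_format] b2[rule_format]])
  then obtain F where F: "F \<subseteq> range ball" and cov0: "\<forall>p. (p \<in> range pp \<longrightarrow> (\<exists>B\<in>F. p \<in> B)) \<and>
              finite {B\<in>F. p \<in> B} \<and> card {B\<in>F. p \<in> B} \<le> N"
    by blast
  have cov: "(p \<in> range pp \<longrightarrow> (\<exists>B\<in>F. p \<in> B)) \<and>
              finite {B\<in>F. p \<in> B} \<and> card {B\<in>F. p \<in> B} \<le> N" for p
    using cov0 by blast
  have mem: "pp m \<in> ball k \<longleftrightarrow> k = m" for k m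
  proof
    assume "pp m \<in> ball k"
    hence "d_inf (pp k) (pp m) \<le> 2 * lam k" by (simp add: ball_def cball_d_def)
    thus "k = m" using sep[of k m] by fastforce
  next
    assume "k = m"
    thus "pp m \<in> ball k"
      using lam_pos[of m] by (simp add: ball_def cball_d_def d_inf_def hmult_def hinv_def pp_def box_norm_def)
  qed
  have inF: "ball n \<in> F" for n
  proof -
    obtain B where "B \<in> F" "pp n \<in> B" using cov[of "pp n"] by blast
    with F obtain k where "B = ball k" by blast
    with \<open>pp n \<in> B\<close> mem have "k = n" by blast
    with \<open>B \<in> F\<close> \<open>B = ball k\<close> show ?thesis by simp
  qed
  have "range ball \<subseteq> {B\<in>F. (0,0,0) \<in> B}"
    using inF zero_in by (auto simp: ball_def cball_d_def)
  moreover have "finite {B\<in>F. (0::real,0::real,0::real) \<in> B}" using cov by blast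
  ultimately have "finite (range ball)" by (rule finite_subset)
  moreover have "inj ball"
    by (rule injI) (metis mem)
  ultimately show False using finite_imageD by fastforce
qed

end
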